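(* Let $A\subset\mathbb{R}$, let $f:A\to\mathbb{R}$ be a function and let $a,L\in\mathbb{R}$. Then the following are equivalent: (i) for every real $\varepsilon>0$ there exists a real $\delta_\varepsilon>0$ such that $$\left\{x\in\left((a-\delta_{\varepsilon},a+\delta_{\varepsilon})\setminus\{a\}\right)\cap A:\ |f(x)-L|\geq\varepsilon\right\}=\varnothing;$$ (ii) for every real $\varepsilon>0$ there exists a real $\delta_\varepsilon>0$ such that the set $$\left\{x\in\left((a-\delta_{\varepsilon},a+\delta_{\varepsilon})\setminus\{a\}\right)\cap A:\ |f(x)-L|\geq\varepsilon\right\}$$ is finite. That is, $T_1\lim_{x\to a}f(x)=L$ if and only if $T_3\lim_{x\to a}f(x)=L$.
   Context: Condition (i) is the classical limit, written $T_1\lim_{x\to a}f(x)=L$; condition (ii) defines the notion written $T_3\lim_{x\to a}f(x)=L$. *)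

theory Defs
  imports Complex_Main
begin

text \<open>The function f : A \<rightarrow> R is modelled as a total function real \<Rightarrow> real; only its values on A matter.\<close>
definition bad_set :: "real set \<Rightarrow> (real \<Rightarrow> real) \<Rightarrow> real \<Rightarrow> real \<Rightarrow> real \<Rightarrow> real \<Rightarrow> real set" where
  "bad_set A f a L \<epsilon> d = {x \<in> ({a - d <..< a + d} - {a}) \<inter> A. \<bar>f x - L\<bar> \<ge> \<epsilon>}"

definition T1_lim :: "real set \<Rightarrow> (real \<Rightarrow> real) \<Rightarrow> real \<Rightarrow> real \<Rightarrow> bool" where
  "T1_lim A f a L \<longleftrightarrow> (\<forall>\<epsilon>>0. \<exists>d>0. bad_set A f a L \<epsilon> d = {})"

definition T3_lim :: "real set \<Rightarrow> (real \<Rightarrow> real) \<Rightarrow> real \<Rightarrow> real \<Rightarrow> bool" where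
  "T3_lim A f a L \<longleftrightarrow> (\<forall>\<epsilon>>0. \<exists>d>0. finite (bad_set A f a L \<epsilon> d))"

end

theory Submission
  imports Defs
begin

theorem theorem1:
  fixes A :: "real set" and f :: "real \<Rightarrow> real" and a L :: real
  shows "T1_lim A f a L \<longleftrightarrow> T3_lim A f a L"
proof
  assume "T1_lim A f a L"
  then show "T3_lim A f a L" unfolding T1_lim_def T3_lim_def by (metis finite.emptyI)
next
  assume H: "T3_lim A f a L"
  show "T1_lim A f a L" unfolding T1_lim_def
  proof (intro allI impI)
    fix e :: real assume "e > 0"
    then obtain d where d: "d > 0" "finite (bad_set A f a L e d)" using H unfolding T3_lim_def by blast
    define S where "S = bad_set A f a L e d"
    define d' where "d' = Min (insert d ((\<lambda>x. \<bar>x - a\<bar>) ` S))"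
    have fin: "finite (insert d ((\<lambda>x. \<bar>x - a\<bar>) ` S))" using d S_def by simp
    have aS: "a \<notin> S" unfolding S_def bad_set_def by auto
    have pos: "d' > 0" unfolding d'_def using fin d aS by (auto simp: Min_gr_iff)
    have "bad_set A f a L e d' = {}"
    proof (rule ccontr)
      assume "bad_set A f a L e d' \<noteq> {}"
      then obtain x where x: "x \<in> bad_set A f a L e d'" by blast
      have le1: "d' \<le> d" unfolding d'_def using fin by simp
      have xa: "\<bar>x - a\<bar> < d'" using x unfolding bad_set_def by auto
      have "x \<in> S" using x le1 unfolding S_def bad_set_def by auto
      then have "d' \<le> \<bar>x - a\<bar>" unfolding d'_def using fin by simp
      then show False using xa by simp
    qed
    then show "\<exists>d>0. bad_set A f a L e d = {}" using pos by blast
  qed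
qed

end
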